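(* Let $F(x)$ be a formula in prenex form with no free variables other than $x$, and let $\mathbf c$ be a nonempty finite set of object constants containing every object constant occurring in $F(x)$. (a) If the sentence $\forall xF(x)$ is safe, then $\forall xF(x)\leftrightarrow\bigwedge_{c\in\mathbf c}F(c)$ is derivable from $\mathit{SPP}_{\mathbf c}$ in $\mathbf{INT}^=+\mathrm{DE}$. (b) If the sentence $\exists xF(x)$ is safe, then $\exists xF(x)\leftrightarrow\bigvee_{c\in\mathbf c}F(c)$ is derivable from $\mathit{SPP}_{\mathbf c}$ in $\mathbf{INT}^=+\mathrm{DE}$.
   Context: Formulas are first-order formulas with object constants, predicate constants and equality, but no function constants of arity $>0$; primitive connectives $\bot,\land,\lor,\rightarrow$, quantifiers $\forall,\exists$; $\neg G$ is $G\rightarrow\bot$, $\top$ is $\bot\rightarrow\bot$, $G\leftrightarrow H$ is $(G\rightarrow H)\land(H\rightarrow G)$. Restricted variables: for quantifier-free $G$, $\mathrm{RV}(G)$ is: $\emptyset$ if $G$ is an equality between two variables; the set of variables of $G$ if $G$ is any other atomic formula; $\mathrm{RV}(\bot)=\emptyset$; $\mathrm{RV}(G\land H)=\mathrm{RV}(G)\cup\mathrm{RV}(H)$; $\mathrm{RV}(G\lor H)=\mathrm{RV}(G)\cap\mathrm{RV}(H)$; $\mathrm{RV}(G\rightarrow H)=\emptyset$. An occurrence of a subformula or variable is positive if the number of implications containing it in their antecedent is even, negative otherwise, and strictly positive if it is in the antecedent of no implication. A prenex sentence $Q_1x_1\cdots Q_nx_nM$ ($M$ quantifier-free, $x_i$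 distinct) is semi-safe if every strictly positive occurrence of every $x_i$ in $M$ belongs to a subformula $G\rightarrow H$ with $x_i\in\mathrm{RV}(G)$. Simplification transformations: $\neg\bot\mapsto\top$, $\neg\top\mapsto\bot$; $\bot\land G\mapsto\bot$, $G\land\bot\mapsto\bot$, $\top\land G\mapsto G$, $G\land\top\mapsto G$; $\bot\lor G\mapsto G$, $G\lor\bot\mapsto G$, $\top\lor G\mapsto\top$, $G\lor\top\mapsto\top$; $\bot\rightarrow G\mapsto\top$, $G\rightarrow\top\mapsto\top$, $\top\rightarrow G\mapsto G$. A variable $x$ is positively (resp. negatively) weakly restricted in a quantifier-free formula $G$ if the formula obtained from $G$ by first replacing every atomic formula $A$ of $G$ with $x\in\mathrm{RV}(A)$ by $\bot$ and then applying the simplification transformations is $\top$ (resp. $\bot$). A semi-safe prenex sentence $Q_1x_1\cdots Q_nx_nM$ is safe if for every occurrence of every variable $x_i$: (a) if $Q_i=\forall$, the occurrence belongs to a positive subformula (of the sentence) in which $x_i$ is positively weakly restricted, or to a negative subformula in which $x_i$ is negatively weakly restricted; (b) if $Q_i=\exists$, the occurrence belongs to a negative subformula in which $x_i$ is positively weakly restricted, or to a positive subformula in which $x_i$ is negatively weakly restricted. For a finite set $\mathbf c$ of object constants, $\mathit{in}_{\mathbf c}(x_1,\dots,x_m)$ is $\bigwedge_{1\le j\le m}\bigvee_{c\in\mathbf c}x_j=c$, and $\mathit{SPP}_{\mathbf c}$ is the conjunction of $\forall\mathbf x(p_i(\mathbf x)\rightarrow\mathit{in}_{\mathbf c}(\mathbf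 x))$ over all predicate constants $p_i$ occurring in $F(x)$. $\mathbf{INT}^=$ is intuitionistic predicate logic with equality; $\mathrm{DE}$ is the decidable equality axiom $x=y\lor x\neq y$. *)

theory Defs
  imports Main
begin

text \<open>Variables are de Bruijn indices: inside a quantifier, index 0 is the bound variable.\<close>

datatype 'c trm = Var nat | Cst 'c

datatype ('c, 'p) fm =
    Bot
  | Eq "'c trm" "'c trm"
  | Pred 'p "'c trm list"
  | And "('c, 'p) fm" "('c, 'p) fm"
  | Or "('c, 'p) fm" "('c, 'p) fm"
  | Imp "('c, 'p) fm" "('c, 'p) fm"
  | All "('c, 'p) fm"
  | Ex "('c, 'p) fm"

definition Neg :: "('c, 'p) fm \<Rightarrow> ('c, 'p) fm" where
  "Neg G = Imp G Bot"

definition Top :: "('c, 'p) fm" where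
  "Top = Imp Bot Bot"

definition Iff :: "('c, 'p) fm \<Rightarrow> ('c, 'p) fm \<Rightarrow> ('c, 'p) fm" where
  "Iff G H = And (Imp G H) (Imp H G)"

fun conj_list :: "('c, 'p) fm list \<Rightarrow> ('c, 'p) fm" where
  "conj_list [] = Top"
| "conj_list [A] = A"
| "conj_list (A # As) = And A (conj_list As)"

fun disj_list :: "('c, 'p) fm list \<Rightarrow> ('c, 'p) fm" where
  "disj_list [] = Bot"
| "disj_list [A] = A"
| "disj_list (A # As) = Or A (disj_list As)"

fun vars_trm :: "'c trm \<Rightarrow> nat set" where
  "vars_trm (Var i) = {i}"
| "vars_trm (Cst c) = {}"

fun consts_trm :: "'c trm \<Rightarrow> 'c set" where
  "consts_trm (Var i) = {}"
| "consts_trm (Cst c) = {c}"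

fun fv :: "('c, 'p) fm \<Rightarrow> nat set" where
  "fv Bot = {}"
| "fv (Eq s t) = vars_trm s \<union> vars_trm t"
| "fv (Pred p ts) = (\<Union>t\<in>set ts. vars_trm t)"
| "fv (And A B) = fv A \<union> fv B"
| "fv (Or A B) = fv A \<union> fv B"
| "fv (Imp A B) = fv A \<union> fv B"
| "fv (All A) = (\<lambda>i. i - 1) ` (fv A - {0})"
| "fv (Ex A) = (\<lambda>i. i - 1) ` (fv A - {0})"

fun consts_fm :: "('c, 'p) fm \<Rightarrow> 'c set" where
  "consts_fm Bot = {}"
| "consts_fm (Eq s t) = consts_trm s \<union> consts_trm t"
| "consts_fm (Pred p ts) = (\<Union>t\<in>set ts. consts_trm t)"
| "consts_fm (And A B) = consts_fm A \<union> consts_fm B"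
| "consts_fm (Or A B) = consts_fm A \<union> consts_fm B"
| "consts_fm (Imp A B) = consts_fm A \<union> consts_fm B"
| "consts_fm (All A) = consts_fm A"
| "consts_fm (Ex A) = consts_fm A"

text \<open>Predicate constants occurring in a formula, paired with the arity of the
occurrence (a predicate constant is identified with its arity).\<close>
fun preds_fm :: "('c, 'p) fm \<Rightarrow> ('p \<times> nat) set" where
  "preds_fm Bot = {}"
| "preds_fm (Eq s t) = {}"
| "preds_fm (Pred p ts) = {(p, length ts)}"
| "preds_fm (And A B) = preds_fm A \<union> preds_fm B"
| "preds_fm (Or A B) = preds_fm A \<union> preds_fm B"
| "preds_fm (Imp A B) = preds_fm A \<union> preds_fm B"
| "preds_fm (All A) = preds_fm A"
| "preds_fm (Ex A) = preds_fm A"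

fun lift_trm :: "nat \<Rightarrow> 'c trm \<Rightarrow> 'c trm" where
  "lift_trm k (Var i) = (if i < k then Var i else Var (Suc i))"
| "lift_trm k (Cst c) = Cst c"

fun lift_fm :: "nat \<Rightarrow> ('c, 'p) fm \<Rightarrow> ('c, 'p) fm" where
  "lift_fm k Bot = Bot"
| "lift_fm k (Eq s t) = Eq (lift_trm k s) (lift_trm k t)"
| "lift_fm k (Pred p ts) = Pred p (map (lift_trm k) ts)"
| "lift_fm k (And A B) = And (lift_fm k A) (lift_fm k B)"
| "lift_fm k (Or A B) = Or (lift_fm k A) (lift_fm k B)"
| "lift_fm k (Imp A B) = Imp (lift_fm k A) (lift_fm k B)"
| "lift_fm k (All A) = All (lift_fm (Suc k) A)"
| "lift_fm k (Ex A) = Ex (lift_fm (Suc k) A)"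

fun subst_trm :: "'c trm \<Rightarrow> nat \<Rightarrow> 'c trm \<Rightarrow> 'c trm" where
  "subst_trm t k (Var i) = (if i < k then Var i else if i = k then t else Var (i - 1))"
| "subst_trm t k (Cst c) = Cst c"

fun subst_fm :: "'c trm \<Rightarrow> nat \<Rightarrow> ('c, 'p) fm \<Rightarrow> ('c, 'p) fm" where
  "subst_fm t k Bot = Bot"
| "subst_fm t k (Eq u v) = Eq (subst_trm t k u) (subst_trm t k v)"
| "subst_fm t k (Pred p ts) = Pred p (map (subst_trm t k) ts)"
| "subst_fm t k (And A B) = And (subst_fm t k A) (subst_fm t k B)"
| "subst_fm t k (Or A B) = Or (subst_fm t k A) (subst_fm t k B)"
| "subst_fm t k (Imp A B) = Imp (subst_fm t k A) (subst_fm t k B)"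
| "subst_fm t k (All A) = All (subst_fm (lift_trm 0 t) (Suc k) A)"
| "subst_fm t k (Ex A) = Ex (subst_fm (lift_trm 0 t) (Suc k) A)"

text \<open>Instantiating the outermost free variable x (index 0) of F(x) by a term.\<close>
abbreviation inst :: "('c, 'p) fm \<Rightarrow> 'c trm \<Rightarrow> ('c, 'p) fm" where
  "inst A t \<equiv> subst_fm t 0 A"

section \<open>Intuitionistic predicate logic with equality, plus DE (natural deduction)\<close>

inductive deriv_DE :: "('c, 'p) fm list \<Rightarrow> ('c, 'p) fm \<Rightarrow> bool" (infix "\<turnstile>\<^sub>D\<^sub>E" 50) where
  Assm:  "A \<in> set \<Gamma> \<Longrightarrow> \<Gamma> \<turnstile>\<^sub>D\<^sub>E A"
| BotE:  "\<Gamma> \<turnstile>\<^sub>D\<^sub>E Bot \<Longrightarrow> \<Gamma> \<turnstile>\<^sub>D\<^sub>E A"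
| AndI:  "\<Gamma> \<turnstile>\<^sub>D\<^sub>E A \<Longrightarrow> \<Gamma> \<turnstile>\<^sub>D\<^sub>E B \<Longrightarrow> \<Gamma> \<turnstile>\<^sub>D\<^sub>E And A B"
| AndE1: "\<Gamma> \<turnstile>\<^sub>D\<^sub>E And A B \<Longrightarrow> \<Gamma> \<turnstile>\<^sub>D\<^sub>E A"
| AndE2: "\<Gamma> \<turnstile>\<^sub>D\<^sub>E And A B \<Longrightarrow> \<Gamma> \<turnstile>\<^sub>D\<^sub>E B"
| OrI1:  "\<Gamma> \<turnstile>\<^sub>D\<^sub>E A \<Longrightarrow> \<Gamma> \<turnstile>\<^sub>D\<^sub>E Or A B"
| OrI2:  "\<Gamma> \<turnstile>\<^sub>D\<^sub>E B \<Longrightarrow> \<Gamma> \<turnstile>\<^sub>D\<^sub>E Or A B"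
| OrE:   "\<Gamma> \<turnstile>\<^sub>D\<^sub>E Or A B \<Longrightarrow> (A # \<Gamma>) \<turnstile>\<^sub>D\<^sub>E C \<Longrightarrow> (B # \<Gamma>) \<turnstile>\<^sub>D\<^sub>E C \<Longrightarrow> \<Gamma> \<turnstile>\<^sub>D\<^sub>E C"
| ImpI:  "(A # \<Gamma>) \<turnstile>\<^sub>D\<^sub>E B \<Longrightarrow> \<Gamma> \<turnstile>\<^sub>D\<^sub>E Imp A B"
| ImpE:  "\<Gamma> \<turnstile>\<^sub>D\<^sub>E Imp A B \<Longrightarrow> \<Gamma> \<turnstile>\<^sub>D\<^sub>E A \<Longrightarrow> \<Gamma> \<turnstile>\<^sub>D\<^sub>E B"
| AllI:  "map (lift_fm 0) \<Gamma> \<turnstile>\<^sub>D\<^sub>E A \<Longrightarrow> \<Gamma> \<turnstile>\<^sub>D\<^sub>E All A"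
| AllE:  "\<Gamma> \<turnstile>\<^sub>D\<^sub>E All A \<Longrightarrow> \<Gamma> \<turnstile>\<^sub>D\<^sub>E inst A t"
| ExI:   "\<Gamma> \<turnstile>\<^sub>D\<^sub>E inst A t \<Longrightarrow> \<Gamma> \<turnstile>\<^sub>D\<^sub>E Ex A"
| ExE:   "\<Gamma> \<turnstile>\<^sub>D\<^sub>E Ex A \<Longrightarrow> (A # map (lift_fm 0) \<Gamma>) \<turnstile>\<^sub>D\<^sub>E lift_fm 0 B \<Longrightarrow> \<Gamma> \<turnstile>\<^sub>D\<^sub>E B"
| Refl:  "\<Gamma> \<turnstile>\<^sub>D\<^sub>E Eq t t"
| EqSubst: "\<Gamma> \<turnstile>\<^sub>D\<^sub>E Eq s t \<Longrightarrow> \<Gamma> \<turnstile>\<^sub>D\<^sub>E inst A s \<Longrightarrow> \<Gamma> \<turnstile>\<^sub>D\<^sub>E inst A t"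
| DE:    "\<Gamma> \<turnstile>\<^sub>D\<^sub>E Or (Eq s t) (Neg (Eq s t))"

fun qfree :: "('c, 'p) fm \<Rightarrow> bool" where
  "qfree (All A) = False"
| "qfree (Ex A) = False"
| "qfree (And A B) = (qfree A \<and> qfree B)"
| "qfree (Or A B) = (qfree A \<and> qfree B)"
| "qfree (Imp A B) = (qfree A \<and> qfree B)"
| "qfree _ = True"

text \<open>Quantifier prefix (True = forall, False = exists; outermost first) and matrix.
In the matrix of Q1 x1 ... Qn xn M, variable x_i is de Bruijn index n - i.\<close>
fun strip :: "('c, 'p) fm \<Rightarrow> bool list \<times> ('c, 'p) fm" where
  "strip (All A) = (let (qs, M) = strip A in (True # qs, M))"
| "strip (Ex A) = (let (qs, M) = strip A in (False # qs, M))"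
| "strip A = ([], A)"

definition prenex :: "('c, 'p) fm \<Rightarrow> bool" where
  "prenex F = qfree (snd (strip F))"

definition sentence :: "('c, 'p) fm \<Rightarrow> bool" where
  "sentence F = (fv F = {})"

fun RV_atom_trm :: "'c trm \<Rightarrow> 'c trm \<Rightarrow> nat set" where
  "RV_atom_trm (Var i) (Var j) = {}"
| "RV_atom_trm s t = vars_trm s \<union> vars_trm t"

fun RV :: "('c, 'p) fm \<Rightarrow> nat set" where
  "RV Bot = {}"
| "RV (Eq s t) = RV_atom_trm s t"
| "RV (Pred p ts) = (\<Union>t\<in>set ts. vars_trm t)"
| "RV (And G H) = RV G \<union> RV H"
| "RV (Or G H) = RV G \<inter> RV H"
| "RV (Imp G H) = {}"
| "RV (All A) = {}"
| "RV (Ex A) = {}"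

text \<open>semi_safe_var x M: every strictly positive occurrence of x in the
quantifier-free M belongs to a subformula G \<longrightarrow> H with x \<in> RV G.\<close>
fun semi_safe_var :: "nat \<Rightarrow> ('c, 'p) fm \<Rightarrow> bool" where
  "semi_safe_var x Bot = True"
| "semi_safe_var x (Eq s t) = (x \<notin> vars_trm s \<union> vars_trm t)"
| "semi_safe_var x (Pred p ts) = (x \<notin> (\<Union>t\<in>set ts. vars_trm t))"
| "semi_safe_var x (And G H) = (semi_safe_var x G \<and> semi_safe_var x H)"
| "semi_safe_var x (Or G H) = (semi_safe_var x G \<and> semi_safe_var x H)"
| "semi_safe_var x (Imp G H) = (x \<in> RV G \<or> semi_safe_var x H)"
| "semi_safe_var x (All A) = False"
| "semi_safe_var x (Ex A) = False"

definition semi_safe :: "('c, 'p) fm \<Rightarrow> bool" where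
  "semi_safe S = (prenex S \<and> sentence S \<and>
     (let (qs, M) = strip S; n = length qs in \<forall>i<n. semi_safe_var (n - 1 - i) M))"

definition mk_and :: "('c, 'p) fm \<Rightarrow> ('c, 'p) fm \<Rightarrow> ('c, 'p) fm" where
  "mk_and G H = (if G = Bot \<or> H = Bot then Bot else if G = Top then H
                 else if H = Top then G else And G H)"

definition mk_or :: "('c, 'p) fm \<Rightarrow> ('c, 'p) fm \<Rightarrow> ('c, 'p) fm" where
  "mk_or G H = (if G = Bot then H else if H = Bot then G
                else if G = Top \<or> H = Top then Top else Or G H)"

definition mk_imp :: "('c, 'p) fm \<Rightarrow> ('c, 'p) fm \<Rightarrow> ('c, 'p) fm" where
  "mk_imp G H = (if G = Bot \<or> H = Top then Top else if G = Top then H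
                 else Imp G H)"

fun simplify :: "('c, 'p) fm \<Rightarrow> ('c, 'p) fm" where
  "simplify (And G H) = mk_and (simplify G) (simplify H)"
| "simplify (Or G H) = mk_or (simplify G) (simplify H)"
| "simplify (Imp G H) = mk_imp (simplify G) (simplify H)"
| "simplify G = G"

fun erase :: "nat \<Rightarrow> ('c, 'p) fm \<Rightarrow> ('c, 'p) fm" where
  "erase x Bot = Bot"
| "erase x (Eq s t) = (if x \<in> RV_atom_trm s t then Bot else Eq s t)"
| "erase x (Pred p ts) = (if x \<in> (\<Union>t\<in>set ts. vars_trm t) then Bot else Pred p ts)"
| "erase x (And G H) = And (erase x G) (erase x H)"
| "erase x (Or G H) = Or (erase x G) (erase x H)"
| "erase x (Imp G H) = Imp (erase x G) (erase x H)"
| "erase x (All A) = All A"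
| "erase x (Ex A) = Ex A"

definition pos_weakly_restricted :: "nat \<Rightarrow> ('c, 'p) fm \<Rightarrow> bool" where
  "pos_weakly_restricted x G = (simplify (erase x G) = Top)"

definition neg_weakly_restricted :: "nat \<Rightarrow> ('c, 'p) fm \<Rightarrow> bool" where
  "neg_weakly_restricted x G = (simplify (erase x G) = Bot)"

text \<open>safe_var q x pol G: every occurrence of x in G lies in a subformula S of G
(including G itself) satisfying the safety condition for quantifier q
(True = forall, False = exists), where pol is the polarity of S
(True = positive) in the whole sentence; pol is the polarity of G.\<close>
definition safe_cond :: "bool \<Rightarrow> nat \<Rightarrow> bool \<Rightarrow> ('c, 'p) fm \<Rightarrow> bool" where
  "safe_cond q x pol G =
     (if q then (pol \<and> pos_weakly_restricted x G) \<or> (\<not> pol \<and> neg_weakly_restricted x G)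
      else (\<not> pol \<and> pos_weakly_restricted x G) \<or> (pol \<and> neg_weakly_restricted x G))"

fun safe_var :: "bool \<Rightarrow> nat \<Rightarrow> bool \<Rightarrow> ('c, 'p) fm \<Rightarrow> bool" where
  "safe_var q x pol Bot = True"
| "safe_var q x pol (Eq s t) = (safe_cond q x pol (Eq s t :: ('c, 'p) fm) \<or> x \<notin> vars_trm s \<union> vars_trm t)"
| "safe_var q x pol (Pred p ts) =
     (safe_cond q x pol (Pred p ts) \<or> x \<notin> (\<Union>t\<in>set ts. vars_trm t))"
| "safe_var q x pol (And G H) =
     (safe_cond q x pol (And G H) \<or> (safe_var q x pol G \<and> safe_var q x pol H))"
| "safe_var q x pol (Or G H) =
     (safe_cond q x pol (Or G H) \<or> (safe_var q x pol G \<and> safe_var q x pol H))"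
| "safe_var q x pol (Imp G H) =
     (safe_cond q x pol (Imp G H) \<or> (safe_var q x (\<not> pol) G \<and> safe_var q x pol H))"
| "safe_var q x pol (All A) = False"
| "safe_var q x pol (Ex A) = False"

definition safe :: "('c, 'p) fm \<Rightarrow> bool" where
  "safe S = (semi_safe S \<and>
     (let (qs, M) = strip S; n = length qs in \<forall>i<n. safe_var (qs ! i) (n - 1 - i) True M))"

text \<open>in_c(x_1,...,x_m) with x_j the de Bruijn index m - j (under m universal binders).\<close>
definition in_c :: "'c list \<Rightarrow> nat \<Rightarrow> ('c, 'p) fm" where
  "in_c cs m = conj_list (map (\<lambda>j. disj_list (map (\<lambda>c. Eq (Var (m - 1 - j)) (Cst c)) cs)) [0..<m])"

definition spp_axiom :: "'c list \<Rightarrow> 'p \<times> nat \<Rightarrow> ('c, 'p) fm" where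
  "spp_axiom cs pm = (case pm of (p, m) \<Rightarrow>
     ((\<lambda>A. All A) ^^ m) (Imp (Pred p (map (\<lambda>j. Var (m - 1 - j)) [0..<m])) (in_c cs m)))"

definition SPP :: "'c list \<Rightarrow> ('p \<times> nat) list \<Rightarrow> ('c, 'p) fm" where
  "SPP cs ps = conj_list (map (spp_axiom cs) ps)"

end

theory Submission
  imports Defs
begin


lemma wk: "\<Gamma> \<turnstile>\<^sub>D\<^sub>E A \<Longrightarrow> set \<Gamma> \<subseteq> set \<Delta> \<Longrightarrow> \<Delta> \<turnstile>\<^sub>D\<^sub>E A"
proof (induction arbitrary: \<Delta> rule: deriv_DE.induct)
  case (AllI \<Gamma> A)
  have "set (map (lift_fm 0) \<Gamma>) \<subseteq> set (map (lift_fm 0) \<Delta>)" using AllI.prems by auto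
  then show ?case by (rule deriv_DE.AllI[OF AllI.IH])
next
  case (ExE \<Gamma> A B)
  have "set (A # map (lift_fm 0) \<Gamma>) \<subseteq> set (A # map (lift_fm 0) \<Delta>)" using ExE.prems by auto
  then show ?case by (rule deriv_DE.ExE[OF ExE.IH(1)[OF ExE.prems] ExE.IH(2)])
next
  case (OrE \<Gamma> A B C)
  show ?case by (rule deriv_DE.OrE[OF OrE.IH(1)[OF OrE.prems] OrE.IH(2) OrE.IH(3)]) (use OrE.prems in auto)
next
  case (ImpI A \<Gamma> B)
  show ?case by (rule deriv_DE.ImpI[OF ImpI.IH]) (use ImpI.prems in auto)
next
  case (Assm A \<Gamma>) then show ?case by (intro deriv_DE.Assm) auto
next
  case (BotE \<Gamma> A) then show ?case by (simp add: deriv_DE.BotE)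
next
  case (AndI \<Gamma> A B) then show ?case by (simp add: deriv_DE.AndI)
next
  case (AndE1 \<Gamma> A B) then show ?case by (meson deriv_DE.AndE1)
next
  case (AndE2 \<Gamma> A B) then show ?case by (meson deriv_DE.AndE2)
next
  case (OrI1 \<Gamma> A B) then show ?case by (simp add: deriv_DE.OrI1)
next
  case (OrI2 \<Gamma> B A) then show ?case by (simp add: deriv_DE.OrI2)
next
  case (ImpE \<Gamma> A B) then show ?case by (meson deriv_DE.ImpE)
next
  case (AllE \<Gamma> A t) then show ?case by (simp add: deriv_DE.AllE)
next
  case (ExI \<Gamma> A t) then show ?case by (meson deriv_DE.ExI)
next
  case (Refl \<Gamma> t) show ?case by (rule deriv_DE.Refl)
next
  case (EqSubst \<Gamma> s t A) then show ?case by (meson deriv_DE.EqSubst)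
next
  case (DE \<Gamma> s t) show ?case by (rule deriv_DE.DE)
qed

lemma wk1: "\<Gamma> \<turnstile>\<^sub>D\<^sub>E A \<Longrightarrow> (B # \<Gamma>) \<turnstile>\<^sub>D\<^sub>E A"
  by (erule wk) auto

lemma topI: "\<Gamma> \<turnstile>\<^sub>D\<^sub>E Top"
  unfolding Top_def by (rule ImpI, rule Assm) simp

lemma imp_refl: "\<Gamma> \<turnstile>\<^sub>D\<^sub>E Imp A A"
  by (rule ImpI, rule Assm) simp

lemma imp_from: "\<Gamma> \<turnstile>\<^sub>D\<^sub>E B \<Longrightarrow> \<Gamma> \<turnstile>\<^sub>D\<^sub>E Imp A B"
  by (rule ImpI, erule wk1)

lemma imp_trans: "\<Gamma> \<turnstile>\<^sub>D\<^sub>E Imp A B \<Longrightarrow> \<Gamma> \<turnstile>\<^sub>D\<^sub>E Imp B C \<Longrightarrow> \<Gamma> \<turnstile>\<^sub>D\<^sub>E Imp A C"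
  apply (rule ImpI)
  apply (rule ImpE[of _ B], erule wk1)
  apply (rule ImpE[of _ A], erule wk1)
  by (rule Assm) simp

lemma bot_imp: "\<Gamma> \<turnstile>\<^sub>D\<^sub>E Imp Bot A"
  by (rule ImpI, rule BotE, rule Assm) simp

lemma neg_imp: "\<Gamma> \<turnstile>\<^sub>D\<^sub>E Neg A \<Longrightarrow> \<Gamma> \<turnstile>\<^sub>D\<^sub>E Imp A B"
  unfolding Neg_def by (erule imp_trans) (rule bot_imp)

lemma hyp: "(A # \<Gamma>) \<turnstile>\<^sub>D\<^sub>E A"
  by (rule Assm) simp

lemma and_mono: "\<Gamma> \<turnstile>\<^sub>D\<^sub>E Imp A A' \<Longrightarrow> \<Gamma> \<turnstile>\<^sub>D\<^sub>E Imp B B' \<Longrightarrow> \<Gamma> \<turnstile>\<^sub>D\<^sub>E Imp (And A B) (And A' B')"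
  apply (rule ImpI, rule AndI)
   apply (rule ImpE[of _ A], erule wk1, rule AndE1, rule hyp)
  apply (rule ImpE[of _ B], erule wk1, rule AndE2, rule hyp)
  done

lemma or_mono: "\<Gamma> \<turnstile>\<^sub>D\<^sub>E Imp A A' \<Longrightarrow> \<Gamma> \<turnstile>\<^sub>D\<^sub>E Imp B B' \<Longrightarrow> \<Gamma> \<turnstile>\<^sub>D\<^sub>E Imp (Or A B) (Or A' B')"
  apply (rule ImpI, rule OrE[of _ A B], rule hyp)
   apply (rule OrI1, rule ImpE[of _ A], rule wk1, erule wk1, rule hyp)
  apply (rule OrI2, rule ImpE[of _ B], rule wk1, erule wk1, rule hyp)
  done

lemma imp_mono: "\<Gamma> \<turnstile>\<^sub>D\<^sub>E Imp A' A \<Longrightarrow> \<Gamma> \<turnstile>\<^sub>D\<^sub>E Imp B B' \<Longrightarrow> \<Gamma> \<turnstile>\<^sub>D\<^sub>E Imp (Imp A B) (Imp A' B')"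
  apply (rule ImpI, rule ImpI)
  apply (rule ImpE[of _ B], rule wk1, erule wk1)
  apply (rule ImpE[of _ A], rule wk1, rule hyp)
  apply (rule ImpE[of _ A'], rule wk1, erule wk1, rule hyp)
  done

lemma lift_trm_closed: "vars_trm t \<subseteq> {..<k} \<Longrightarrow> lift_trm k t = t"
  by (cases t) auto

lemma lift_closed: "\<forall>i\<in>fv A. i < k \<Longrightarrow> lift_fm k A = A"
proof (induction A arbitrary: k)
  case (Eq s t) then show ?case by (auto intro!: lift_trm_closed)
next
  case (Pred p ts) then show ?case by (auto intro!: lift_trm_closed map_idI)
next
  case (All A) 
  have "\<forall>i\<in>fv A. i < Suc k" using All.prems by force
  then show ?case using All.IH by simp
next
  case (Ex A) 
  have "\<forall>i\<in>fv A. i < Suc k" using Ex.prems by force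
  then show ?case using Ex.IH by simp
qed auto

lemma subst_lift_trm: "subst_trm (Var k) k (lift_trm (Suc k) u) = u"
  by (cases u) auto

lemma subst_lift_id: "subst_fm (Var k) k (lift_fm (Suc k) A) = A"
  by (induction A arbitrary: k) (auto simp: subst_lift_trm map_idI)

lemma subst_var_trm: "vars_trm u \<subseteq> {..k} \<Longrightarrow> subst_trm (Var k) k u = u"
  by (cases u) auto

lemma subst_var_id: "\<forall>i\<in>fv A. i \<le> k \<Longrightarrow> subst_fm (Var k) k A = A"
proof (induction A arbitrary: k)
  case (Eq s t) then show ?case by (auto intro!: subst_var_trm)
next
  case (Pred p ts) then show ?case by (auto intro!: subst_var_trm map_idI)
next
  case (All A) 
  have "\<forall>i\<in>fv A. i \<le> Suc k" using All.prems by force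
  then show ?case using All.IH by simp
next
  case (Ex A) 
  have "\<forall>i\<in>fv A. i \<le> Suc k" using Ex.prems by force
  then show ?case using Ex.IH by simp
qed auto

lemma subst_lift0: "subst_trm u 0 (lift_trm 0 s) = s"
  by (cases s) auto

lemma eq_sym: "\<Gamma> \<turnstile>\<^sub>D\<^sub>E Eq s t \<Longrightarrow> \<Gamma> \<turnstile>\<^sub>D\<^sub>E Eq t s"
  using EqSubst[of \<Gamma> s t "Eq (Var 0) (lift_trm 0 s)"]
  by (simp add: subst_lift0 Refl)




lemma conj_list_I: "(\<forall>A\<in>set As. \<Gamma> \<turnstile>\<^sub>D\<^sub>E A) \<Longrightarrow> \<Gamma> \<turnstile>\<^sub>D\<^sub>E conj_list As"
  by (induction As rule: conj_list.induct) (auto intro: topI AndI)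

lemma conj_list_E: "\<Gamma> \<turnstile>\<^sub>D\<^sub>E conj_list As \<Longrightarrow> A \<in> set As \<Longrightarrow> \<Gamma> \<turnstile>\<^sub>D\<^sub>E A"
  by (induction As rule: conj_list.induct) (auto dest: AndE1 AndE2)

lemma disj_list_I: "\<Gamma> \<turnstile>\<^sub>D\<^sub>E A \<Longrightarrow> A \<in> set As \<Longrightarrow> \<Gamma> \<turnstile>\<^sub>D\<^sub>E disj_list As"
  by (induction As rule: disj_list.induct) (auto intro: OrI1 OrI2)

lemma disj_list_E: "\<Gamma> \<turnstile>\<^sub>D\<^sub>E disj_list As \<Longrightarrow> (\<forall>A\<in>set As. (A # \<Gamma>) \<turnstile>\<^sub>D\<^sub>E B) \<Longrightarrow> \<Gamma> \<turnstile>\<^sub>D\<^sub>E B"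
proof (induction As arbitrary: \<Gamma> rule: disj_list.induct)
  case 1 then show ?case by (simp add: BotE)
next
  case (2 A) then show ?case
    by (auto intro: ImpE[OF ImpI])
next
  case (3 A v va)
  show ?case
  proof (rule OrE[of _ A "disj_list (v # va)"])
    show "\<Gamma> \<turnstile>\<^sub>D\<^sub>E Or A (disj_list (v # va))" using 3 by simp
    show "(A # \<Gamma>) \<turnstile>\<^sub>D\<^sub>E B" using 3 by simp
    show "(disj_list (v # va) # \<Gamma>) \<turnstile>\<^sub>D\<^sub>E B"
      apply (rule "3.IH", rule hyp)
      using "3.prems"(2) by (auto intro: wk)
  qed
qed

lemma split_lemma:
  assumes "\<And>c \<Gamma>'. c \<in> set cs \<Longrightarrow> set \<Gamma> \<subseteq> set \<Gamma>' \<Longrightarrow> Eq v (Cst c) \<in> set \<Gamma>' \<Longrightarrow> \<Gamma>' \<turnstile>\<^sub>D\<^sub>E A"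
    and "\<And>\<Gamma>'. set \<Gamma> \<subseteq> set \<Gamma>' \<Longrightarrow> (\<forall>c\<in>set cs. Neg (Eq v (Cst c)) \<in> set \<Gamma>') \<Longrightarrow> \<Gamma>' \<turnstile>\<^sub>D\<^sub>E A"
  shows "\<Gamma> \<turnstile>\<^sub>D\<^sub>E A"
  using assms
proof (induction cs arbitrary: \<Gamma>)
  case Nil then show ?case by auto
next
  case (Cons c cs)
  show ?case
  proof (rule OrE[OF DE[of \<Gamma> v "Cst c"]])
    show "(Eq v (Cst c) # \<Gamma>) \<turnstile>\<^sub>D\<^sub>E A" by (rule Cons.prems(1)) auto
    show "(Neg (Eq v (Cst c)) # \<Gamma>) \<turnstile>\<^sub>D\<^sub>E A"
      apply (rule Cons.IH)
      using Cons.prems by auto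
  qed
qed




fun ssubst_trm :: "(nat \<Rightarrow> 'c trm) \<Rightarrow> 'c trm \<Rightarrow> 'c trm" where
  "ssubst_trm \<sigma> (Var i) = \<sigma> i"
| "ssubst_trm \<sigma> (Cst c) = Cst c"

fun ssubst_fm :: "(nat \<Rightarrow> 'c trm) \<Rightarrow> ('c, 'p) fm \<Rightarrow> ('c, 'p) fm" where
  "ssubst_fm \<sigma> Bot = Bot"
| "ssubst_fm \<sigma> (Eq u v) = Eq (ssubst_trm \<sigma> u) (ssubst_trm \<sigma> v)"
| "ssubst_fm \<sigma> (Pred p ts) = Pred p (map (ssubst_trm \<sigma>) ts)"
| "ssubst_fm \<sigma> (And A B) = And (ssubst_fm \<sigma> A) (ssubst_fm \<sigma> B)"
| "ssubst_fm \<sigma> (Or A B) = Or (ssubst_fm \<sigma> A) (ssubst_fm \<sigma> B)"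
| "ssubst_fm \<sigma> (Imp A B) = Imp (ssubst_fm \<sigma> A) (ssubst_fm \<sigma> B)"
| "ssubst_fm \<sigma> (All A) = All A"
| "ssubst_fm \<sigma> (Ex A) = Ex A"

lemma qfree_subst: "qfree B \<Longrightarrow> qfree (subst_fm t k B)"
  by (induction B) auto

lemma subst_trm_ssubst: "subst_trm t k u = ssubst_trm (\<lambda>i. if i < k then Var i else if i = k then t else Var (i - 1)) u"
  by (cases u) auto

lemma subst_ssubst: "qfree B \<Longrightarrow> subst_fm t k B = ssubst_fm (\<lambda>i. if i < k then Var i else if i = k then t else Var (i - 1)) B"
  by (induction B) (auto simp: subst_trm_ssubst)

lemma ssubst_trm_comp: "ssubst_trm \<sigma> (ssubst_trm \<tau> u) = ssubst_trm (ssubst_trm \<sigma> \<circ> \<tau>) u"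
  by (cases u) auto

lemma ssubst_comp: "ssubst_fm \<sigma> (ssubst_fm \<tau> B) = ssubst_fm (ssubst_trm \<sigma> \<circ> \<tau>) B"
  by (induction B) (auto simp: ssubst_trm_comp comp_def)

lemma subst_Alls: "subst_fm t k (((\<lambda>A. All A) ^^ n) X) = ((\<lambda>A. All A) ^^ n) (subst_fm ((lift_trm 0 ^^ n) t) (k + n) X)"
proof (induction n arbitrary: t k)
  case 0 then show ?case by simp
next
  case (Suc n)
  have "subst_fm t k (((\<lambda>A. All A) ^^ Suc n) X) = All (subst_fm (lift_trm 0 t) (Suc k) (((\<lambda>A. All A) ^^ n) X))"
    by simp
  also have "\<dots> = All (((\<lambda>A. All A) ^^ n) (subst_fm ((lift_trm 0 ^^ n) (lift_trm 0 t)) (Suc k + n) X))"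
    using Suc.IH by simp
  also have "\<dots> = ((\<lambda>A. All A) ^^ Suc n) (subst_fm ((lift_trm 0 ^^ Suc n) t) (k + Suc n) X)"
  proof -
    have "(lift_trm 0 ^^ n) (lift_trm 0 t) = (lift_trm 0 ^^ Suc n) t" by (simp only: funpow_Suc_right comp_def)
    then show ?thesis by simp
  qed
  finally show ?case .
qed

lemma lift_pow_Var: "(lift_trm 0 ^^ n) (Var i) = Var (i + n)"
  by (induction n) auto

lemma lift_pow_Cst: "(lift_trm 0 ^^ n) (Cst c) = Cst c"
  by (induction n) auto

lemma ssubst_Var: "ssubst_trm Var u = u" by (cases u) auto

lemma ssubst_fm_Var: "ssubst_fm Var B = B"
  by (induction B) (auto simp: ssubst_Var map_idI)

definition sig :: "'c trm list \<Rightarrow> nat \<Rightarrow> 'c trm" where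
  "sig ts i = (if i < length ts then ts ! (length ts - 1 - i) else Var (i - length ts))"

lemma sig_Nil: "sig [] = Var" by (auto simp: sig_def)

lemma sig_comp:
  "ssubst_trm (sig ts) \<circ> (\<lambda>i. if i < length ts then Var i else if i = length ts then (lift_trm 0 ^^ length ts) t else Var (i - 1))
   = sig (t # ts)"
proof
  fix i
  show "(ssubst_trm (sig ts) \<circ> (\<lambda>i. if i < length ts then Var i else if i = length ts then (lift_trm 0 ^^ length ts) t else Var (i - 1))) i
     = sig (t # ts) i"
  proof (cases "i < length ts")
    case True
    then show ?thesis by (simp add: sig_def nth_Cons' Suc_diff_Suc)
  next
    case False
    show ?thesis
    proof (cases "i = length ts")
      case True
      then show ?thesis by (cases t) (auto simp: sig_def lift_pow_Var lift_pow_Cst)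
    next
      case False2: False
      then show ?thesis using False by (auto simp: sig_def)
    qed
  qed
qed

lemma inst_Alls: "qfree B \<Longrightarrow> \<Gamma> \<turnstile>\<^sub>D\<^sub>E ((\<lambda>A. All A) ^^ length ts) B \<Longrightarrow> \<Gamma> \<turnstile>\<^sub>D\<^sub>E ssubst_fm (sig ts) B"
proof (induction ts arbitrary: B)
  case Nil
  then show ?case by (simp add: sig_Nil ssubst_fm_Var)
next
  case (Cons t ts)
  have "\<Gamma> \<turnstile>\<^sub>D\<^sub>E All (((\<lambda>A. All A) ^^ length ts) B)" using Cons.prems by simp
  then have "\<Gamma> \<turnstile>\<^sub>D\<^sub>E inst (((\<lambda>A. All A) ^^ length ts) B) t" by (rule AllE)
  then have "\<Gamma> \<turnstile>\<^sub>D\<^sub>E ((\<lambda>A. All A) ^^ length ts) (subst_fm ((lift_trm 0 ^^ length ts) t) (length ts) B)"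
    by (simp add: subst_Alls)
  then have "\<Gamma> \<turnstile>\<^sub>D\<^sub>E ssubst_fm (sig ts) (subst_fm ((lift_trm 0 ^^ length ts) t) (length ts) B)"
    by (rule Cons.IH[rotated]) (rule qfree_subst[OF Cons.prems(1)])
  then show ?case by (simp add: subst_ssubst[OF Cons.prems(1)] ssubst_comp sig_comp)
qed




lemma ssubst_conj: "ssubst_fm \<sigma> (conj_list As) = conj_list (map (ssubst_fm \<sigma>) As)"
  by (induction As rule: conj_list.induct) (auto simp: Top_def)

lemma ssubst_disj: "ssubst_fm \<sigma> (disj_list As) = disj_list (map (ssubst_fm \<sigma>) As)"
  by (induction As rule: disj_list.induct) auto

lemma qfree_conj: "(\<forall>A\<in>set As. qfree A) \<Longrightarrow> qfree (conj_list As)"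
  by (induction As rule: conj_list.induct) (auto simp: Top_def)

lemma qfree_disj: "(\<forall>A\<in>set As. qfree A) \<Longrightarrow> qfree (disj_list As)"
  by (induction As rule: disj_list.induct) auto

lemma spp_inst:
  fixes ps :: "('p \<times> nat) list" and ts :: "'c trm list"
  assumes "(p, length ts) \<in> set ps" and "\<Gamma> \<turnstile>\<^sub>D\<^sub>E SPP cs ps"
  shows "\<Gamma> \<turnstile>\<^sub>D\<^sub>E Imp (Pred p ts) (conj_list (map (\<lambda>j. disj_list (map (\<lambda>c. Eq (ts!j) (Cst c)) cs)) [0..<length ts]))"
proof -
  define m where "m = length ts"
  define B where "B = Imp (Pred p (map (\<lambda>j. Var (m - 1 - j)) [0..<m])) (in_c cs m)"
  have "\<Gamma> \<turnstile>\<^sub>D\<^sub>E spp_axiom cs (p, m)"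
    using assms unfolding SPP_def m_def by (auto intro: conj_list_E)
  then have "\<Gamma> \<turnstile>\<^sub>D\<^sub>E ((\<lambda>A. All A) ^^ length ts) B"
    by (simp add: spp_axiom_def B_def m_def)
  moreover have "qfree B"
    unfolding B_def in_c_def by (auto intro!: qfree_conj qfree_disj)
  ultimately have "\<Gamma> \<turnstile>\<^sub>D\<^sub>E ssubst_fm (sig ts) B"
    by (intro inst_Alls)
  moreover have "ssubst_fm (sig ts) B = Imp (Pred p ts) (conj_list (map (\<lambda>j. disj_list (map (\<lambda>c. Eq (ts!j) (Cst c)) cs)) [0..<length ts]))"
  proof -
    have s: "sig ts (m - 1 - j) = ts ! j" if "j < m" for j
      using that by (auto simp: sig_def m_def)
    have "map (ssubst_trm (sig ts)) (map (\<lambda>j. Var (m - 1 - j)) [0..<m]) = ts"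
      by (rule nth_equalityI) (auto simp: s m_def sig_def)
    moreover have "map (ssubst_fm (sig ts)) (map (\<lambda>j. disj_list (map (\<lambda>c. Eq (Var (m - 1 - j)) (Cst c)) cs)) [0..<m])
        = (map (\<lambda>j. disj_list (map (\<lambda>c. Eq (ts!j) (Cst c)) cs)) [0..<length ts] :: ('c, 'p) fm list)"
      by (auto simp: ssubst_disj m_def sig_def comp_def)
    ultimately show ?thesis
      unfolding B_def in_c_def ssubst_fm.simps ssubst_conj map_map by (simp only:)
  qed
  ultimately show ?thesis by simp
qed

definition PP :: "'c list \<Rightarrow> ('p \<times> nat) list \<Rightarrow> ('c, 'p) fm list \<Rightarrow> nat \<Rightarrow> bool" where
  "PP cs ps \<Delta> k = (SPP cs ps \<in> set \<Delta> \<and> (\<forall>c\<in>set cs. Neg (Eq (Var k) (Cst c)) \<in> set \<Delta>))"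

lemma refute_eq1: "PP cs ps \<Delta> k \<Longrightarrow> c \<in> set cs \<Longrightarrow> \<Delta> \<turnstile>\<^sub>D\<^sub>E Neg (Eq (Var k) (Cst c))"
  unfolding PP_def by (auto intro: Assm)

lemma refute_eq2: "PP cs ps \<Delta> k \<Longrightarrow> c \<in> set cs \<Longrightarrow> \<Delta> \<turnstile>\<^sub>D\<^sub>E Neg (Eq (Cst c) (Var k))"
  unfolding Neg_def
  apply (rule ImpI)
  apply (rule ImpE[of _ "Eq (Var k) (Cst c)"])
   apply (rule wk1) apply (drule (1) refute_eq1) apply (simp add: Neg_def)
  apply (rule eq_sym, rule hyp)
  done

lemma refute_pred:
  fixes \<Delta> :: "('c, 'p) fm list"
  assumes "PP cs ps \<Delta> k" "(p, length ts) \<in> set ps" "Var k \<in> set ts"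
  shows "\<Delta> \<turnstile>\<^sub>D\<^sub>E Neg (Pred p ts)"
proof -
  obtain j where j: "j < length ts" "ts ! j = Var k" using assms(3) by (auto simp: in_set_conv_nth)
  let ?\<Gamma> = "Pred p ts # \<Delta>"
  have "?\<Gamma> \<turnstile>\<^sub>D\<^sub>E SPP cs ps" using assms(1) by (auto simp: PP_def intro: Assm)
  then have "?\<Gamma> \<turnstile>\<^sub>D\<^sub>E Imp (Pred p ts) (conj_list (map (\<lambda>j. disj_list (map (\<lambda>c. Eq (ts!j) (Cst c)) cs)) [0..<length ts]))"
    by (rule spp_inst[OF assms(2)])
  then have "?\<Gamma> \<turnstile>\<^sub>D\<^sub>E conj_list (map (\<lambda>j. disj_list (map (\<lambda>c. Eq (ts!j) (Cst c)) cs)) [0..<length ts])"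
    by (rule ImpE) (rule hyp)
  then have "?\<Gamma> \<turnstile>\<^sub>D\<^sub>E disj_list (map (\<lambda>c. Eq (ts!j) (Cst c)) cs)"
    by (rule conj_list_E) (use j in \<open>auto intro!: image_eqI[where x=j]\<close>)
  then have "?\<Gamma> \<turnstile>\<^sub>D\<^sub>E Bot"
  proof (rule disj_list_E, intro ballI)
    fix A :: "('c, 'p) fm" assume "A \<in> set (map (\<lambda>c. Eq (ts ! j) (Cst c)) cs)"
    then obtain c where c: "c \<in> set cs" "A = Eq (Var k) (Cst c)" using j by auto
    have "(A # ?\<Gamma>) \<turnstile>\<^sub>D\<^sub>E Neg (Eq (Var k) (Cst c))"
      by (rule refute_eq1[OF _ c(1)]) (use assms(1) in \<open>auto simp: PP_def\<close>)
    then show "(A # ?\<Gamma>) \<turnstile>\<^sub>D\<^sub>E Bot" unfolding Neg_def by (rule ImpE) (simp add: c hyp)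
  qed
  then show ?thesis unfolding Neg_def by (rule ImpI)
qed




lemma andE1_imp: "\<Gamma> \<turnstile>\<^sub>D\<^sub>E Imp (And A B) A"
  by (rule ImpI, rule AndE1, rule hyp)
lemma andE2_imp: "\<Gamma> \<turnstile>\<^sub>D\<^sub>E Imp (And A B) B"
  by (rule ImpI, rule AndE2, rule hyp)
lemma orI1_imp: "\<Gamma> \<turnstile>\<^sub>D\<^sub>E Imp A (Or A B)"
  by (rule ImpI, rule OrI1, rule hyp)
lemma orI2_imp: "\<Gamma> \<turnstile>\<^sub>D\<^sub>E Imp B (Or A B)"
  by (rule ImpI, rule OrI2, rule hyp)
lemma from_top: "\<Gamma> \<turnstile>\<^sub>D\<^sub>E Imp Top G \<Longrightarrow> \<Gamma> \<turnstile>\<^sub>D\<^sub>E G"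
  by (erule ImpE, rule topI)
lemma and_intro_imp: "\<Gamma> \<turnstile>\<^sub>D\<^sub>E Imp X A \<Longrightarrow> \<Gamma> \<turnstile>\<^sub>D\<^sub>E Imp X B \<Longrightarrow> \<Gamma> \<turnstile>\<^sub>D\<^sub>E Imp X (And A B)"
  apply (rule ImpI, rule AndI)
   apply (rule ImpE[of _ X], erule wk1, rule hyp)
  apply (rule ImpE[of _ X], erule wk1, rule hyp)
  done
lemma or_elim_imp: "\<Gamma> \<turnstile>\<^sub>D\<^sub>E Imp A C \<Longrightarrow> \<Gamma> \<turnstile>\<^sub>D\<^sub>E Imp B C \<Longrightarrow> \<Gamma> \<turnstile>\<^sub>D\<^sub>E Imp (Or A B) C"
  apply (rule ImpI, rule OrE[of _ A B], rule hyp)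
   apply (rule ImpE[of _ A], rule wk1, erule wk1, rule hyp)
  apply (rule ImpE[of _ B], rule wk1, erule wk1, rule hyp)
  done
lemma k_imp: "\<Gamma> \<turnstile>\<^sub>D\<^sub>E Imp H (Imp G H)"
  by (rule ImpI, rule imp_from, rule hyp)
lemma mp_imp: "\<Gamma> \<turnstile>\<^sub>D\<^sub>E G \<Longrightarrow> \<Gamma> \<turnstile>\<^sub>D\<^sub>E Imp H H' \<Longrightarrow> \<Gamma> \<turnstile>\<^sub>D\<^sub>E Imp (Imp G H) H'"
  apply (rule ImpI)
  apply (rule ImpE[of _ H], erule wk1)
  apply (rule ImpE[of _ G], rule hyp, erule wk1)
  done
lemma imp_bot_any: "\<Gamma> \<turnstile>\<^sub>D\<^sub>E Imp G Bot \<Longrightarrow> \<Gamma> \<turnstile>\<^sub>D\<^sub>E Imp G X"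
  by (erule imp_trans, rule bot_imp)

lemma mk_and_ok:
  assumes "\<Gamma> \<turnstile>\<^sub>D\<^sub>E Imp G G'" "\<Gamma> \<turnstile>\<^sub>D\<^sub>E Imp G' G" "\<Gamma> \<turnstile>\<^sub>D\<^sub>E Imp H H'" "\<Gamma> \<turnstile>\<^sub>D\<^sub>E Imp H' H"
  shows "\<Gamma> \<turnstile>\<^sub>D\<^sub>E Imp (And G H) (mk_and G' H') \<and> \<Gamma> \<turnstile>\<^sub>D\<^sub>E Imp (mk_and G' H') (And G H)"
proof (cases "G' = Bot \<or> H' = Bot")
  case True
  then have "\<Gamma> \<turnstile>\<^sub>D\<^sub>E Imp (And G H) Bot"
    using assms imp_trans[OF andE1_imp] imp_trans[OF andE2_imp] by metis
  then show ?thesis using True by (simp add: mk_and_def bot_imp)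
next
  case nb: False
  show ?thesis
  proof (cases "G' = Top")
    case True
    have "\<Gamma> \<turnstile>\<^sub>D\<^sub>E G" using assms(2) True by (simp add: from_top)
    then show ?thesis using nb True assms
      by (simp add: mk_and_def imp_trans[OF andE2_imp] and_intro_imp imp_from)
  next
    case nt: False
    show ?thesis
    proof (cases "H' = Top")
      case True
      have "\<Gamma> \<turnstile>\<^sub>D\<^sub>E H" using assms(4) True by (simp add: from_top)
      then show ?thesis using nb nt True assms
        by (simp add: mk_and_def imp_trans[OF andE1_imp] and_intro_imp imp_from)
    next
      case False
      then show ?thesis using nb nt assms by (simp add: mk_and_def and_mono)
    qed
  qed
qed

lemma mk_or_ok:
  assumes "\<Gamma> \<turnstile>\<^sub>D\<^sub>E Imp G G'" "\<Gamma> \<turnstile>\<^sub>D\<^sub>E Imp G' G" "\<Gamma> \<turnstile>\<^sub>D\<^sub>E Imp H H'" "\<Gamma> \<turnstile>\<^sub>D\<^sub>E Imp H' H"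
  shows "\<Gamma> \<turnstile>\<^sub>D\<^sub>E Imp (Or G H) (mk_or G' H') \<and> \<Gamma> \<turnstile>\<^sub>D\<^sub>E Imp (mk_or G' H') (Or G H)"
proof (cases "G' = Bot")
  case True
  then show ?thesis using assms
    by (simp add: mk_or_def or_elim_imp imp_bot_any imp_trans[OF _ orI2_imp])
next
  case nb1: False
  show ?thesis
  proof (cases "H' = Bot")
    case True
    then show ?thesis using assms nb1
      by (simp add: mk_or_def or_elim_imp imp_bot_any imp_trans[OF _ orI1_imp])
  next
    case nb2: False
    show ?thesis
    proof (cases "G' = Top \<or> H' = Top")
      case True
      have "\<Gamma> \<turnstile>\<^sub>D\<^sub>E Or G H"
      proof (cases "G' = Top")
        case True then show ?thesis using assms(2) by (auto intro: OrI1 from_top)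
      next
        case False then have "H' = Top" using \<open>G' = Top \<or> H' = Top\<close> by simp
        then show ?thesis using assms(4) by (auto intro: OrI2 from_top)
      qed
      then show ?thesis using nb1 nb2 True by (simp add: mk_or_def imp_from topI)
    next
      case False
      then show ?thesis using nb1 nb2 assms by (simp add: mk_or_def or_mono)
    qed
  qed
qed

lemma mk_imp_ok:
  assumes "\<Gamma> \<turnstile>\<^sub>D\<^sub>E Imp G G'" "\<Gamma> \<turnstile>\<^sub>D\<^sub>E Imp G' G" "\<Gamma> \<turnstile>\<^sub>D\<^sub>E Imp H H'" "\<Gamma> \<turnstile>\<^sub>D\<^sub>E Imp H' H"
  shows "\<Gamma> \<turnstile>\<^sub>D\<^sub>E Imp (Imp G H) (mk_imp G' H') \<and> \<Gamma> \<turnstile>\<^sub>D\<^sub>E Imp (mk_imp G' H') (Imp G H)"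
proof (cases "G' = Bot \<or> H' = Top")
  case True
  have "\<Gamma> \<turnstile>\<^sub>D\<^sub>E Imp G H"
  proof (cases "G' = Bot")
    case True then show ?thesis using assms(1) by (simp add: imp_bot_any)
  next
    case False then have "H' = Top" using \<open>G' = Bot \<or> H' = Top\<close> by simp
    then show ?thesis using assms(4) by (auto intro: imp_from from_top)
  qed
  then show ?thesis using True by (simp add: mk_imp_def imp_from topI)
next
  case nb: False
  show ?thesis
  proof (cases "G' = Top")
    case True
    have "\<Gamma> \<turnstile>\<^sub>D\<^sub>E G" using assms(2) True by (simp add: from_top)
    then show ?thesis using nb True assms
      by (simp add: mk_imp_def mp_imp imp_trans[OF _ k_imp])
  next
    case False
    then show ?thesis using nb assms by (simp add: mk_imp_def imp_mono)
  qed
qed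

lemma refute_eq:
  assumes "PP cs ps \<Delta> k" "k \<in> RV_atom_trm s t" "consts_trm s \<union> consts_trm t \<subseteq> set cs"
  shows "\<Delta> \<turnstile>\<^sub>D\<^sub>E Neg (Eq s t)"
proof (cases s)
  case (Var i)
  then show ?thesis
  proof (cases t)
    case (Var j) then show ?thesis using assms \<open>s = Var i\<close> by simp
  next
    case (Cst c) then show ?thesis using assms \<open>s = Var i\<close> by (auto intro: refute_eq1)
  qed
next
  case (Cst c)
  then show ?thesis
  proof (cases t)
    case (Var j) then show ?thesis using assms \<open>s = Cst c\<close> by (auto intro: refute_eq2)
  next
    case (Cst d) then show ?thesis using assms \<open>s = Cst c\<close> by simp
  qed
qed

lemma W:
  fixes \<Delta> :: "('c, 'p) fm list"
  assumes PP: "PP cs ps \<Delta> k"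
  shows "qfree G \<Longrightarrow> consts_fm G \<subseteq> set cs \<Longrightarrow> preds_fm G \<subseteq> set ps \<Longrightarrow>
     \<Delta> \<turnstile>\<^sub>D\<^sub>E Imp G (simplify (erase k G)) \<and> \<Delta> \<turnstile>\<^sub>D\<^sub>E Imp (simplify (erase k G)) G"
proof (induction G)
  case Bot then show ?case by (simp add: imp_refl)
next
  case (Eq s t)
  show ?case
  proof (cases "k \<in> RV_atom_trm s t")
    case True
    have "\<Delta> \<turnstile>\<^sub>D\<^sub>E Neg (Eq s t)" by (rule refute_eq[OF PP True]) (use Eq.prems in simp)
    then show ?thesis using True by (simp add: Neg_def bot_imp)
  next
    case False then show ?thesis by (simp add: imp_refl)
  qed
next
  case (Pred p ts)
  show ?case
  proof (cases "k \<in> (\<Union>t\<in>set ts. vars_trm t)")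
    case True
    then obtain t where t: "t \<in> set ts" "k \<in> vars_trm t" by auto
    have vk: "\<And>u. k \<in> vars_trm u \<Longrightarrow> u = Var k" by (case_tac u) auto
    have "t = Var k" by (rule vk[OF t(2)])
    then have "\<Delta> \<turnstile>\<^sub>D\<^sub>E Neg (Pred p ts)"
      using t Pred.prems by (intro refute_pred[OF PP]) auto
    then show ?thesis using True by (simp add: Neg_def bot_imp)
  next
    case False then show ?thesis by (simp add: imp_refl)
  qed
next
  case (And G H) then show ?case by (simp add: mk_and_ok)
next
  case (Or G H) then show ?case by (simp add: mk_or_ok)
next
  case (Imp G H) then show ?case by (simp add: mk_imp_ok)
qed auto




lemma se_top: "PP cs ps \<Delta> k \<Longrightarrow> qfree M \<Longrightarrow> consts_fm M \<subseteq> set cs \<Longrightarrow> preds_fm M \<subseteq> set ps \<Longrightarrow>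
  simplify (erase k M) = Top \<Longrightarrow> \<Delta> \<turnstile>\<^sub>D\<^sub>E Imp X M"
  by (drule (3) W) (auto intro: imp_from from_top)

lemma se_bot: "PP cs ps \<Delta> k \<Longrightarrow> qfree M \<Longrightarrow> consts_fm M \<subseteq> set cs \<Longrightarrow> preds_fm M \<subseteq> set ps \<Longrightarrow>
  simplify (erase k M) = Bot \<Longrightarrow> \<Delta> \<turnstile>\<^sub>D\<^sub>E Imp M X"
  by (drule (3) W) (auto intro: imp_bot_any)

lemma from_cond:
  assumes "PP cs ps \<Delta> k" "qfree M" "consts_fm M \<subseteq> set cs" "preds_fm M \<subseteq> set ps" "safe_cond q k pol M"
  shows "\<Delta> \<turnstile>\<^sub>D\<^sub>E (if q = pol then Imp X M else Imp M X)"
proof -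
  have "(q = pol \<and> simplify (erase k M) = Top) \<or> (q \<noteq> pol \<and> simplify (erase k M) = Bot)"
    using assms(5) unfolding safe_cond_def pos_weakly_restricted_def neg_weakly_restricted_def
    by (cases q; cases pol) auto
  then show ?thesis using se_top[OF assms(1-4)] se_bot[OF assms(1-4)] by auto
qed

lemma subst_cst_trm: "\<forall>i\<in>vars_trm u. i \<le> k \<Longrightarrow> k \<notin> vars_trm u \<Longrightarrow> subst_trm (Cst c) k u = u"
  by (cases u) auto

lemma matrix:
  fixes \<Delta> :: "('c, 'p) fm list"
  assumes PP: "PP cs ps \<Delta> k"
  shows "qfree M \<Longrightarrow> \<forall>i\<in>fv M. i \<le> k \<Longrightarrow> consts_fm M \<subseteq> set cs \<Longrightarrow> preds_fm M \<subseteq> set ps \<Longrightarrow>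
    safe_var q k pol M \<Longrightarrow>
    \<Delta> \<turnstile>\<^sub>D\<^sub>E (if q = pol then Imp (subst_fm (Cst c) k M) M else Imp M (subst_fm (Cst c) k M))"
proof (induction M arbitrary: pol)
  case Bot then show ?case by (simp add: imp_refl)
next
  case (Eq s t)
  show ?case
  proof (cases "safe_cond q k pol (Eq s t :: ('c, 'p) fm)")
    case True then show ?thesis using from_cond[OF PP] Eq.prems by blast
  next
    case False
    then have "k \<notin> vars_trm s \<union> vars_trm t" using Eq.prems by simp
    then have "subst_fm (Cst c) k (Eq s t :: ('c, 'p) fm) = Eq s t"
      using Eq.prems by (auto simp: subst_cst_trm)
    then show ?thesis by (simp add: imp_refl)
  qed
next
  case (Pred p ts)
  show ?case
  proof (cases "safe_cond q k pol (Pred p ts :: ('c, 'p) fm)")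
    case True then show ?thesis using from_cond[OF PP] Pred.prems by blast
  next
    case False
    then have "k \<notin> (\<Union>t\<in>set ts. vars_trm t)" using Pred.prems by simp
    then have "subst_fm (Cst c) k (Pred p ts :: ('c, 'p) fm) = Pred p ts"
      using Pred.prems by (auto simp: subst_cst_trm intro!: map_idI)
    then show ?thesis by (simp add: imp_refl)
  qed
next
  case (And G H)
  show ?case
  proof (cases "safe_cond q k pol (And G H)")
    case True then show ?thesis using from_cond[OF PP] And.prems by blast
  next
    case False
    then have "safe_var q k pol G" "safe_var q k pol H" using And.prems by auto
    then show ?thesis using And.IH[of pol] And.prems by (cases "q = pol") (auto intro: and_mono)
  qed
next
  case (Or G H)
  show ?case
  proof (cases "safe_cond q k pol (Or G H)")
    case True then show ?thesis using from_cond[OF PP] Or.prems by blast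
  next
    case False
    then have "safe_var q k pol G" "safe_var q k pol H" using Or.prems by auto
    then show ?thesis using Or.IH[of pol] Or.prems by (cases "q = pol") (auto intro: or_mono)
  qed
next
  case (Imp G H)
  show ?case
  proof (cases "safe_cond q k pol (Imp G H)")
    case True then show ?thesis using from_cond[OF PP] Imp.prems by blast
  next
    case False
    then have "safe_var q k (\<not> pol) G" "safe_var q k pol H" using Imp.prems by auto
    then show ?thesis using Imp.IH(1)[of "\<not> pol"] Imp.IH(2)[of pol] Imp.prems
      by (cases "q = pol") (auto intro: imp_mono)
  qed
qed auto

fun rebuild :: "bool list \<Rightarrow> ('c, 'p) fm \<Rightarrow> ('c, 'p) fm" where
  "rebuild [] M = M"
| "rebuild (q # qs) M = (if q then All (rebuild qs M) else Ex (rebuild qs M))"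

lemma strip_rebuild: "rebuild (fst (strip F)) (snd (strip F)) = F"
  by (induction F rule: strip.induct) (auto simp: split_beta)

lemma subst_rebuild: "subst_fm (Cst c) k (rebuild qs M) = rebuild qs (subst_fm (Cst c) (k + length qs) M)"
  by (induction qs arbitrary: k) auto

lemma preds_rebuild: "preds_fm (rebuild qs M) = preds_fm M"
  by (induction qs) auto

lemma consts_rebuild: "consts_fm (rebuild qs M) = consts_fm M"
  by (induction qs) auto

lemma fv_rebuild: "\<forall>i\<in>fv (rebuild qs M). i \<le> k \<Longrightarrow> \<forall>i\<in>fv M. i \<le> k + length qs"
proof (induction qs arbitrary: k)
  case Nil then show ?case by simp
next
  case (Cons q qs)
  have "\<forall>i\<in>fv (rebuild qs M). i \<le> Suc k"
  proof
    fix i assume i: "i \<in> fv (rebuild qs M)"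
    show "i \<le> Suc k"
    proof (cases i)
      case (Suc j)
      then have "j \<in> fv (rebuild (q # qs) M)" using i by (cases q) force+
      then show ?thesis using Cons.prems Suc by auto
    qed simp
  qed
  then show ?case using Cons.IH by fastforce
qed

lemma all_mono: "map (lift_fm 0) \<Gamma> \<turnstile>\<^sub>D\<^sub>E Imp A B \<Longrightarrow> \<Gamma> \<turnstile>\<^sub>D\<^sub>E Imp (All A) (All B)"
  apply (rule ImpI, rule AllI)
  apply simp
  apply (rule ImpE[of _ A], erule wk1)
  using AllE[OF hyp[of "All (lift_fm (Suc 0) A)"], of _ "Var 0"] subst_lift_id[of 0 A]
  by simp

lemma ex_mono: "map (lift_fm 0) \<Gamma> \<turnstile>\<^sub>D\<^sub>E Imp A B \<Longrightarrow> \<Gamma> \<turnstile>\<^sub>D\<^sub>E Imp (Ex A) (Ex B)"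
  apply (rule ImpI, rule ExE[of _ A], rule hyp)
  apply simp
  apply (rule ExI[where t = "Var 0"])
  apply (simp add: subst_lift_id)
  apply (rule ImpE[of _ A])
   apply (rule wk, assumption, force)
  apply (rule hyp)
  done

lemma fv_conj: "fv (conj_list As) \<subseteq> \<Union>(fv ` set As)"
  by (induction As rule: conj_list.induct) (auto simp: Top_def)

lemma fv_disj: "fv (disj_list As) \<subseteq> \<Union>(fv ` set As)"
  by (induction As rule: disj_list.induct) auto

lemma fv_Alls: "fv B \<subseteq> {..<k + n} \<Longrightarrow> fv (((\<lambda>A. All A) ^^ n) B) \<subseteq> {..<k}"
proof (induction n arbitrary: k)
  case 0 then show ?case by simp
next
  case (Suc n)
  have "fv (((\<lambda>A. All A) ^^ n) B) \<subseteq> {..<Suc k}" using Suc by simp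
  then show ?case by auto
qed

lemma fv_spp: "fv (spp_axiom cs pm) = {}"
proof -
  obtain p m where pm: "pm = (p, m)" by force
  have "fv (in_c cs m :: ('a, 'b) fm) \<subseteq> {..<m}"
  proof -
    have "fv (in_c cs m :: ('a, 'b) fm) \<subseteq> \<Union>(fv ` set (map (\<lambda>j. disj_list (map (\<lambda>c. Eq (Var (m - 1 - j)) (Cst c)) cs) :: ('a, 'b) fm) [0..<m]))"
      unfolding in_c_def by (rule fv_conj)
    also have "\<dots> \<subseteq> {..<m}"
    proof (clarsimp)
      fix j i assume "j < m" "i \<in> fv (disj_list (map (\<lambda>c. Eq (Var (m - Suc j)) (Cst c)) cs) :: ('a, 'b) fm)"
      then have "i \<in> \<Union>(fv ` set (map (\<lambda>c. Eq (Var (m - Suc j)) (Cst c)) cs :: ('a, 'b) fm list))"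
        using fv_disj[of "map (\<lambda>c. Eq (Var (m - Suc j)) (Cst c)) cs :: ('a, 'b) fm list"] by blast
      then have "i = m - Suc j" by (simp split: if_splits)
      then show "i < m" using \<open>j < m\<close> by simp
    qed
    finally show ?thesis .
  qed
  then have "fv (Imp (Pred p (map (\<lambda>j. Var (m - 1 - j)) [0..<m])) (in_c cs m) :: ('a, 'b) fm) \<subseteq> {..<0 + m}"
    by auto
  then have "fv (((\<lambda>A. All A) ^^ m) (Imp (Pred p (map (\<lambda>j. Var (m - 1 - j)) [0..<m])) (in_c cs m)) :: ('a, 'b) fm) \<subseteq> {..<0}"
    by (rule fv_Alls)
  then show ?thesis unfolding spp_axiom_def pm by simp
qed

lemma fv_SPP: "fv (SPP cs ps) = {}"
proof -
  have "fv (SPP cs ps) \<subseteq> \<Union>(fv ` set (map (spp_axiom cs) ps))" unfolding SPP_def by (rule fv_conj)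
  also have "\<dots> = {}" by (simp add: fv_spp)
  finally show ?thesis by blast
qed

lemma PP_lift: "PP cs ps \<Delta> k \<Longrightarrow> PP cs ps (map (lift_fm 0) \<Delta>) (Suc k)"
proof -
  assume a: "PP cs ps \<Delta> k"
  have "lift_fm 0 (SPP cs ps) = SPP cs ps" by (rule lift_closed) (simp add: fv_SPP)
  then have "SPP cs ps \<in> set (map (lift_fm 0) \<Delta>)" using a unfolding PP_def by (metis image_eqI list.set_map)
  moreover have "Neg (Eq (Var (Suc k)) (Cst c)) \<in> set (map (lift_fm 0) \<Delta>)" if "c \<in> set cs" for c
  proof -
    have "lift_fm 0 (Neg (Eq (Var k) (Cst c))) = Neg (Eq (Var (Suc k)) (Cst c))" by (simp add: Neg_def)
    then show ?thesis using a that unfolding PP_def by (metis image_eqI list.set_map)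
  qed
  ultimately show ?thesis unfolding PP_def by auto
qed

lemma mono_prefix:
  "(\<And>\<Delta>'. PP cs ps \<Delta>' (k + length qs) \<Longrightarrow> \<Delta>' \<turnstile>\<^sub>D\<^sub>E Imp A B) \<Longrightarrow> PP cs ps \<Delta> k \<Longrightarrow>
   \<Delta> \<turnstile>\<^sub>D\<^sub>E Imp (rebuild qs A) (rebuild qs B)"
proof (induction qs arbitrary: \<Delta> k)
  case Nil then show ?case by simp
next
  case (Cons q qs)
  have "map (lift_fm 0) \<Delta> \<turnstile>\<^sub>D\<^sub>E Imp (rebuild qs A) (rebuild qs B)"
    by (rule Cons.IH[of "Suc k"]) (use Cons.prems PP_lift in auto)
  then show ?case by (cases q) (auto intro: all_mono ex_mono)
qed




lemma fv_subst_cst: "\<forall>i\<in>fv A. i \<le> k \<Longrightarrow> \<forall>i\<in>fv (subst_fm (Cst c) k A). i < k"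
proof (induction A arbitrary: k)
  case (Eq s t) then show ?case by (cases s; cases t) auto
next
  case (Pred p ts)
  have "\<forall>i\<in>vars_trm (subst_trm (Cst c) k u). i < k" if "\<forall>i\<in>vars_trm u. i \<le> k" for u
    using that by (cases u) auto
  then show ?case using Pred.prems by fastforce
next
  case (All A)
  have "\<forall>i\<in>fv A. i \<le> Suc k" using All.prems by force
  then have "\<forall>i\<in>fv (subst_fm (Cst c) (Suc k) A). i < Suc k" by (rule All.IH)
  then show ?case by auto
next
  case (Ex A)
  have "\<forall>i\<in>fv A. i \<le> Suc k" using Ex.prems by force
  then have "\<forall>i\<in>fv (subst_fm (Cst c) (Suc k) A). i < Suc k" by (rule Ex.IH)
  then show ?case by auto
qed auto

theorem lemma8:
  fixes F :: "('c, 'p) fm" and cs :: "'c list" and ps :: "('p \<times> nat) list"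
  assumes "prenex F"
    and "fv F \<subseteq> {0}"
    and "cs \<noteq> []" and "distinct cs"
    and "consts_fm F \<subseteq> set cs"
    and "distinct ps" and "set ps = preds_fm F"
  shows "(safe (All F) \<longrightarrow>
            [SPP cs ps] \<turnstile>\<^sub>D\<^sub>E Iff (All F) (conj_list (map (\<lambda>c. inst F (Cst c)) cs)))
       \<and> (safe (Ex F) \<longrightarrow>
            [SPP cs ps] \<turnstile>\<^sub>D\<^sub>E Iff (Ex F) (disj_list (map (\<lambda>c. inst F (Cst c)) cs)))"
proof -
  define qs where "qs = fst (strip F)"
  define M where "M = snd (strip F)"
  define m where "m = length qs"
  have sF: "strip F = (qs, M)" by (simp add: qs_def M_def)
  have qfM: "qfree M" using assms(1) by (simp add: prenex_def M_def)
  have FR: "F = rebuild qs M" by (simp add: qs_def M_def strip_rebuild)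
  have fvF: "\<forall>i\<in>fv F. i \<le> 0" using assms(2) by auto
  have fvM: "\<forall>i\<in>fv M. i \<le> m" using fv_rebuild[of qs M 0] fvF FR m_def by simp
  have cM: "consts_fm M \<subseteq> set cs" using assms(5) FR consts_rebuild by metis
  have pM: "preds_fm M \<subseteq> set ps" using assms(7) FR preds_rebuild by (metis order_refl)
  have instF: "inst F (Cst c) = rebuild qs (subst_fm (Cst c) m M)" for c
    using FR subst_rebuild[of c 0 qs M] m_def by simp
  have inst_closed: "fv (inst F (Cst c)) = {}" for c
    using fv_subst_cst[OF fvF, of c] by auto
  have F0: "inst F (Var 0) = F" using subst_var_id[OF fvF] .
  have SPP_closed: "lift_fm 0 (SPP cs ps) = SPP cs ps" by (rule lift_closed) (simp add: fv_SPP)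
  obtain c0 where c0: "c0 \<in> set cs" using assms(3) by (cases cs) auto

  let ?C = "conj_list (map (\<lambda>c. inst F (Cst c)) cs)"
  let ?D = "disj_list (map (\<lambda>c. inst F (Cst c)) cs)"
  have C_closed: "lift_fm 0 ?C = ?C"
    by (rule lift_closed) (use fv_conj[of "map (\<lambda>c. inst F (Cst c)) cs"] inst_closed in auto)
  have D_closed: "lift_fm 0 ?D = ?D"
    by (rule lift_closed) (use fv_disj[of "map (\<lambda>c. inst F (Cst c)) cs"] inst_closed in auto)
  have ExF_closed: "lift_fm 0 (Ex F) = Ex F"
    by (rule lift_closed) (use assms(2) in auto)

  have PP_of: "PP cs ps \<Gamma>' 0" if "SPP cs ps \<in> set \<Gamma>'" "\<forall>c\<in>set cs. Neg (Eq (Var 0) (Cst c)) \<in> set \<Gamma>'" for \<Gamma>'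
    using that by (simp add: PP_def)

  have partA: "[SPP cs ps] \<turnstile>\<^sub>D\<^sub>E Iff (All F) ?C" if sA: "safe (All F)"
  proof -
    have sv: "safe_var True m True M"
      using sA unfolding safe_def by (auto simp: sF m_def)
    have key: "\<Delta> \<turnstile>\<^sub>D\<^sub>E Imp (inst F (Cst c)) F" if "PP cs ps \<Delta> 0" "c \<in> set cs" for \<Delta> c
    proof -
      have "\<Delta> \<turnstile>\<^sub>D\<^sub>E Imp (rebuild qs (subst_fm (Cst c) m M)) (rebuild qs M)"
      proof (rule mono_prefix[OF _ that(1)])
        fix \<Delta>' :: "('c, 'p) fm list" assume "PP cs ps \<Delta>' (0 + length qs)"
        then have "PP cs ps \<Delta>' m" by (simp add: m_def)
        from matrix[OF this qfM fvM cM pM sv, of c] show "\<Delta>' \<turnstile>\<^sub>D\<^sub>E Imp (subst_fm (Cst c) m M) M" by simp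
      qed
      then show ?thesis using instF FR by metis
    qed
    show ?thesis unfolding Iff_def
    proof (rule AndI)
      show "[SPP cs ps] \<turnstile>\<^sub>D\<^sub>E Imp (All F) ?C"
        by (rule ImpI, rule conj_list_I) (auto intro: AllE hyp)
      show "[SPP cs ps] \<turnstile>\<^sub>D\<^sub>E Imp ?C (All F)"
      proof (rule ImpI, rule AllI)
        have "[?C, SPP cs ps] \<turnstile>\<^sub>D\<^sub>E F"
        proof (rule split_lemma[where v = "Var 0" and cs = cs])
          fix c \<Gamma>' assume c: "c \<in> set cs" and sub: "set [?C, SPP cs ps] \<subseteq> set \<Gamma>'" and eq: "Eq (Var 0) (Cst c) \<in> set \<Gamma>'"
          have "\<Gamma>' \<turnstile>\<^sub>D\<^sub>E ?C" using sub by (auto intro: Assm)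
          then have "\<Gamma>' \<turnstile>\<^sub>D\<^sub>E inst F (Cst c)" by (rule conj_list_E) (use c in auto)
          moreover have "\<Gamma>' \<turnstile>\<^sub>D\<^sub>E Eq (Cst c) (Var 0)" by (rule eq_sym, rule Assm, rule eq)
          ultimately have "\<Gamma>' \<turnstile>\<^sub>D\<^sub>E inst F (Var 0)" by (rule EqSubst[rotated])
          then show "\<Gamma>' \<turnstile>\<^sub>D\<^sub>E F" by (simp add: F0)
        next
          fix \<Gamma>' assume sub: "set [?C, SPP cs ps] \<subseteq> set \<Gamma>'" and ne: "\<forall>c\<in>set cs. Neg (Eq (Var 0) (Cst c)) \<in> set \<Gamma>'"
          have "PP cs ps \<Gamma>' 0" using sub ne PP_of by auto
          have "\<Gamma>' \<turnstile>\<^sub>D\<^sub>E ?C" using sub by (auto intro: Assm)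
          then have "\<Gamma>' \<turnstile>\<^sub>D\<^sub>E inst F (Cst c0)" by (rule conj_list_E) (use c0 in auto)
          then show "\<Gamma>' \<turnstile>\<^sub>D\<^sub>E F" by (rule ImpE[OF key[OF \<open>PP cs ps \<Gamma>' 0\<close> c0]])
        qed
        then show "map (lift_fm 0) [?C, SPP cs ps] \<turnstile>\<^sub>D\<^sub>E F" by (simp only: list.map C_closed SPP_closed)
      qed
    qed
  qed

  have partB: "[SPP cs ps] \<turnstile>\<^sub>D\<^sub>E Iff (Ex F) ?D" if sE: "safe (Ex F)"
  proof -
    have sv: "safe_var False m True M"
      using sE unfolding safe_def by (auto simp: sF m_def)
    have key: "\<Delta> \<turnstile>\<^sub>D\<^sub>E Imp F (inst F (Cst c))" if "PP cs ps \<Delta> 0" "c \<in> set cs" for \<Delta> c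
    proof -
      have "\<Delta> \<turnstile>\<^sub>D\<^sub>E Imp (rebuild qs M) (rebuild qs (subst_fm (Cst c) m M))"
      proof (rule mono_prefix[OF _ that(1)])
        fix \<Delta>' :: "('c, 'p) fm list" assume "PP cs ps \<Delta>' (0 + length qs)"
        then have "PP cs ps \<Delta>' m" by (simp add: m_def)
        from matrix[OF this qfM fvM cM pM sv, of c] show "\<Delta>' \<turnstile>\<^sub>D\<^sub>E Imp M (subst_fm (Cst c) m M)" by simp
      qed
      then show ?thesis using instF FR by metis
    qed
    show ?thesis unfolding Iff_def
    proof (rule AndI)
      show "[SPP cs ps] \<turnstile>\<^sub>D\<^sub>E Imp ?D (Ex F)"
      proof (rule ImpI, rule disj_list_E[OF hyp], intro ballI)
        fix A assume "A \<in> set (map (\<lambda>c. inst F (Cst c)) cs)"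
        then obtain c where "A = inst F (Cst c)" by auto
        then show "(A # ?D # [SPP cs ps]) \<turnstile>\<^sub>D\<^sub>E Ex F" by (auto intro: ExI hyp)
      qed
      show "[SPP cs ps] \<turnstile>\<^sub>D\<^sub>E Imp (Ex F) ?D"
      proof (rule ImpI, rule ExE[OF hyp])
        have "[F, Ex F, SPP cs ps] \<turnstile>\<^sub>D\<^sub>E ?D"
        proof (rule split_lemma[where v = "Var 0" and cs = cs])
          fix c \<Gamma>' assume c: "c \<in> set cs" and sub: "set [F, Ex F, SPP cs ps] \<subseteq> set \<Gamma>'" and eq: "Eq (Var 0) (Cst c) \<in> set \<Gamma>'"
          have "\<Gamma>' \<turnstile>\<^sub>D\<^sub>E inst F (Var 0)" using sub F0 by (auto intro: Assm)
          then have "\<Gamma>' \<turnstile>\<^sub>D\<^sub>E inst F (Cst c)" by (rule EqSubst[OF Assm[OF eq]])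
          then show "\<Gamma>' \<turnstile>\<^sub>D\<^sub>E ?D" by (rule disj_list_I) (use c in auto)
        next
          fix \<Gamma>' assume sub: "set [F, Ex F, SPP cs ps] \<subseteq> set \<Gamma>'" and ne: "\<forall>c\<in>set cs. Neg (Eq (Var 0) (Cst c)) \<in> set \<Gamma>'"
          have "PP cs ps \<Gamma>' 0" using sub ne PP_of by auto
          have "\<Gamma>' \<turnstile>\<^sub>D\<^sub>E F" using sub by (auto intro: Assm)
          then have "\<Gamma>' \<turnstile>\<^sub>D\<^sub>E inst F (Cst c0)" by (rule ImpE[OF key[OF \<open>PP cs ps \<Gamma>' 0\<close> c0]])
          then show "\<Gamma>' \<turnstile>\<^sub>D\<^sub>E ?D" by (rule disj_list_I) (use c0 in auto)
        qed
        then show "(F # map (lift_fm 0) [Ex F, SPP cs ps]) \<turnstile>\<^sub>D\<^sub>E lift_fm 0 ?D"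
          by (simp only: list.map ExF_closed SPP_closed D_closed)
      qed
    qed
  qed

  show ?thesis using partA partB by blast
qed


end
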